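(* Let $a,b$ be distinct assertion variables. The implication $$(1\hookrightarrow\_)\wedge(a*b)\ \Rightarrow\ \big((1\hookrightarrow\_)*a\big)\vee\big((1\hookrightarrow\_)*b\big)$$ holds in the unary interpretation (for every $\eta$ and every $\rho:\mathsf{AVar}\to\mathsf{IRel}_1$, the meaning of the left side is contained in that of the right side), but fails in the binary interpretation: with $\rho(a)=\{([1],[])\}^\uparrow$ and $\rho(b)=\{([],[1])\}^\uparrow$, the pair $([1],[1])$ belongs to the binary meaning of the left side while both disjuncts on the right have empty binary meaning.
   Context: $\mathsf{Heap}$: finite partial functions $\mathsf{PosInt}\to\mathsf{Int}$; $[]$ the empty heap; $[m]$ the heap storing $0$ at location $m$ and nothing else; $g\sqsubseteq h$ means $h$ extends $g$; $h\cdot g$ union of disjoint heaps; componentwise on $\mathsf{Heap}^n$; $S^\uparrow$ is the upward closure of a set $S$ of tuples. $\mathsf{IRel}_n$: upward closed subsets of $\mathsf{Heap}^n$; $p*q=\{\mathbf f\cdot\mathbf g\mid\mathbf f\in p,\mathbf g\in q,\text{componentwise disjoint}\}$; $\Delta_n(X)=\{(h_1,\dots,h_n)\mid\exists f\in X.\ \forall k.\ f\sqsubseteq h_k\}$ for $X\subseteq\mathsf{Heap}$. Assertion semantics with $\eta$ (ordinary variables to integers) and $\rho:\mathsf{AVar}\to\mathsf{IRel}_n$: primitive assertions $P$ mean $\Delta_n$ of their standard set of heaps, variables $a$ mean $\rho(a)$, $\wedge,\vee,*$ mean $\cap,\cup,*$, $\exists$ means union over integer values. $1\hookrightarrow\_$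 abbreviates $\exists y.\,1\hookrightarrow y$, whose standard set of heaps is $\{h\mid 1\in\operatorname{dom}(h)\}$. Binary: $n=2$; unary: $n=1$. *)

theory Defs
  imports Main
begin

typedef heap = "{h :: nat \<rightharpoonup> int. finite (dom h) \<and> 0 \<notin> dom h}"
  by (rule exI[of _ Map.empty]) simp

setup_lifting type_definition_heap

lift_definition hsub :: "heap \<Rightarrow> heap \<Rightarrow> bool" is "\<lambda>g h. g \<subseteq>\<^sub>m h" .

lift_definition hdisj :: "heap \<Rightarrow> heap \<Rightarrow> bool" is "\<lambda>g h. dom g \<inter> dom h = {}" .

lift_definition hunion :: "heap \<Rightarrow> heap \<Rightarrow> heap" is "\<lambda>g h. g ++ h" by auto

lift_definition hemp :: heap is "Map.empty" by simp

lift_definition hcell :: "nat \<Rightarrow> heap" is "\<lambda>m. if m = 0 then Map.empty else [m \<mapsto> 0]"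
  by auto

lift_definition hlookup :: "heap \<Rightarrow> nat \<Rightarrow> int option" is "\<lambda>h m. h m" .

section \<open>Tuples of heaps (elements of Heap^n are lists of length n)\<close>

definition upclose :: "nat \<Rightarrow> heap list set \<Rightarrow> heap list set" where
  "upclose n S = {hs. length hs = n \<and> (\<exists>gs\<in>S. list_all2 hsub gs hs)}"

definition IRel :: "nat \<Rightarrow> heap list set \<Rightarrow> bool" where
  "IRel n p \<longleftrightarrow> (\<forall>hs\<in>p. length hs = n) \<and>
     (\<forall>gs hs. gs \<in> p \<longrightarrow> length hs = n \<longrightarrow> list_all2 hsub gs hs \<longrightarrow> hs \<in> p)"

definition sstar :: "heap list set \<Rightarrow> heap list set \<Rightarrow> heap list set" where
  "sstar p q = {map2 hunion fs gs | fs gs. fs \<in> p \<and> gs \<in> q \<and> list_all2 hdisj fs gs}"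

definition Delta :: "nat \<Rightarrow> heap set \<Rightarrow> heap list set" where
  "Delta n X = {hs. length hs = n \<and> (\<exists>f\<in>X. \<forall>k<n. hsub f (hs ! k))}"

type_synonym var = string

datatype expr = Num int | Var var

datatype 'av assn =
    PointsTo expr expr
  | AVar 'av
  | Conj "'av assn" "'av assn"
  | Disj "'av assn" "'av assn"
  | SStar "'av assn" "'av assn"
  | Ex var "'av assn"

fun eval :: "(var \<Rightarrow> int) \<Rightarrow> expr \<Rightarrow> int" where
  "eval \<eta> (Num k) = k"
| "eval \<eta> (Var x) = \<eta> x"

definition pts_std :: "int \<Rightarrow> int \<Rightarrow> heap set" where
  "pts_std l v = {h. l > 0 \<and> hlookup h (nat l) = Some v}"

fun sem :: "nat \<Rightarrow> (var \<Rightarrow> int) \<Rightarrow> ('av \<Rightarrow> heap list set) \<Rightarrow> 'av assn \<Rightarrow> heap list set" where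
  "sem n \<eta> \<rho> (PointsTo e1 e2) = Delta n (pts_std (eval \<eta> e1) (eval \<eta> e2))"
| "sem n \<eta> \<rho> (AVar a) = \<rho> a"
| "sem n \<eta> \<rho> (Conj A B) = sem n \<eta> \<rho> A \<inter> sem n \<eta> \<rho> B"
| "sem n \<eta> \<rho> (Disj A B) = sem n \<eta> \<rho> A \<union> sem n \<eta> \<rho> B"
| "sem n \<eta> \<rho> (SStar A B) = sstar (sem n \<eta> \<rho> A) (sem n \<eta> \<rho> B)"
| "sem n \<eta> \<rho> (Ex x A) = (\<Union>v. sem n (\<eta>(x := v)) \<rho> A)"

text \<open>1 \<hookrightarrow> _  abbreviates  \<exists>y. 1 \<hookrightarrow> y\<close>
definition one_pts_any :: "'av assn" where
  "one_pts_any = Ex ''y'' (PointsTo (Num 1) (Var ''y''))"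

end

theory Submission
  imports Defs
begin

lemma hsub_look: "hsub f h \<Longrightarrow> hlookup f m = Some v \<Longrightarrow> hlookup h m = Some v"
  by transfer (auto simp: map_le_def dom_def)

lemma hdisj_look: "hdisj f g \<Longrightarrow> hlookup f m = Some v \<Longrightarrow> hlookup g m = None"
  by transfer auto

lemma hunion_look: "hlookup (hunion f g) m = (case hlookup g m of Some v \<Rightarrow> Some v | None \<Rightarrow> hlookup f m)"
  by transfer (auto simp: map_add_def)

lemma hdisj_sym: "hdisj f g \<Longrightarrow> hdisj g f" by transfer auto

lemma hunion_comm: "hdisj f g \<Longrightarrow> hunion f g = hunion g f"
  by transfer (metis map_add_comm)

lemma hsub_refl: "hsub f f" by transfer simp

lemma hcell1_look: "hlookup (hcell 1) 1 = Some 0" by transfer simp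
lemma hdisj1: "hdisj (hcell 1) hemp" by transfer simp
lemma hdisj2: "hdisj hemp (hcell 1)" by transfer simp
lemma hun1: "hunion (hcell 1) hemp = hcell 1" by transfer simp
lemma hun2: "hunion hemp (hcell 1) = hcell 1" by transfer simp

lemma sem_one: "sem n \<eta> \<rho> one_pts_any = {hs. length hs = n \<and> (\<exists>f v. hlookup f 1 = Some v \<and> (\<forall>k<n. hsub f (hs ! k)))}"
  by (auto simp: one_pts_any_def Delta_def pts_std_def)

lemma len1: "length xs = Suc 0 \<Longrightarrow> xs = [xs ! 0]"
  by (cases xs) auto

theorem mainTheorem16:
  fixes a b :: 'av
  assumes "a \<noteq> b"
  shows "(\<forall>\<eta> (\<rho> :: 'av \<Rightarrow> heap list set). (\<forall>c. IRel 1 (\<rho> c)) \<longrightarrow>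
            sem 1 \<eta> \<rho> (Conj one_pts_any (SStar (AVar a) (AVar b)))
            \<subseteq> sem 1 \<eta> \<rho> (Disj (SStar one_pts_any (AVar a)) (SStar one_pts_any (AVar b))))
       \<and> (\<forall>\<eta> (\<rho> :: 'av \<Rightarrow> heap list set).
            \<rho> a = upclose 2 {[hcell 1, hemp]} \<longrightarrow> \<rho> b = upclose 2 {[hemp, hcell 1]} \<longrightarrow>
            [hcell 1, hcell 1] \<in> sem 2 \<eta> \<rho> (Conj one_pts_any (SStar (AVar a) (AVar b)))
            \<and> sem 2 \<eta> \<rho> (SStar one_pts_any (AVar a)) = {}
            \<and> sem 2 \<eta> \<rho> (SStar one_pts_any (AVar b)) = {})"
proof (intro conjI allI impI)
  fix \<eta> and \<rho> :: "'av \<Rightarrow> heap list set"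
  assume R: "\<forall>c. IRel 1 (\<rho> c)"
  show "sem 1 \<eta> \<rho> (Conj one_pts_any (SStar (AVar a) (AVar b)))
            \<subseteq> sem 1 \<eta> \<rho> (Disj (SStar one_pts_any (AVar a)) (SStar one_pts_any (AVar b)))"
  proof
    fix hs assume H: "hs \<in> sem 1 \<eta> \<rho> (Conj one_pts_any (SStar (AVar a) (AVar b)))"
    have H1: "hs \<in> sem 1 \<eta> \<rho> one_pts_any" and H2: "hs \<in> sstar (\<rho> a) (\<rho> b)"
      using H by simp_all
    from H1 obtain f v where fv: "hlookup f 1 = Some v" "hsub f (hs ! 0)"
      unfolding sem_one by blast
    from H2 obtain fs gs where fs: "fs \<in> \<rho> a" "gs \<in> \<rho> b" "list_all2 hdisj fs gs"
      and hs: "hs = map2 hunion fs gs" unfolding sstar_def by blast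
    have Ra: "\<forall>hs\<in>\<rho> a. length hs = 1" and Rb: "\<forall>hs\<in>\<rho> b. length hs = 1"
      using R unfolding IRel_def by blast+
    have lf: "length fs = Suc 0" "length gs = Suc 0" using Ra Rb fs(1,2) by simp_all
    have xy: "fs = [fs!0]" "gs = [gs!0]" using len1[OF lf(1)] len1[OF lf(2)] .
    define x where "x = fs!0"
    define y where "y = gs!0"
    have xy': "fs = [x]" "gs = [y]" using xy x_def y_def by simp_all
    have d: "hdisj x y" using fs(3) xy' by simp
    have h0: "hs = [hunion x y]" using hs xy' by simp
    have "hlookup (hunion x y) 1 = Some v" using fv h0 hsub_look by simp
    hence "(\<exists>w. hlookup y 1 = Some w) \<or> (\<exists>w. hlookup x 1 = Some w)"
      by (simp add: hunion_look split: option.splits)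
    thus "hs \<in> sem 1 \<eta> \<rho> (Disj (SStar one_pts_any (AVar a)) (SStar one_pts_any (AVar b)))"
    proof
      assume "\<exists>w. hlookup y 1 = Some w"
      then obtain w where w: "hlookup y 1 = Some w" by blast
      have y1: "[y] \<in> sem 1 \<eta> \<rho> one_pts_any" using w hsub_refl unfolding sem_one by fastforce
      have e: "hs = map2 hunion [y] [x]" using h0 hunion_comm[OF d] by simp
      have l: "list_all2 hdisj [y] [x]" using d hdisj_sym by simp
      have "hs \<in> sstar (sem 1 \<eta> \<rho> one_pts_any) (\<rho> a)"
        unfolding sstar_def using y1 e l fs(1) xy' by blast
      thus ?thesis by simp
    next
      assume "\<exists>w. hlookup x 1 = Some w"
      then obtain w where w: "hlookup x 1 = Some w" by blast
      have x1: "[x] \<in> sem 1 \<eta> \<rho> one_pts_any" using w hsub_refl unfolding sem_one by fastforce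
      have "hs \<in> sstar (sem 1 \<eta> \<rho> one_pts_any) (\<rho> b)"
        unfolding sstar_def using x1 h0 fs(2,3) xy' d by (intro CollectI exI[of _ "[x]"] exI[of _ "[y]"]) simp
      thus ?thesis by simp
    qed
  qed
next
  fix \<eta> and \<rho> :: "'av \<Rightarrow> heap list set"
  assume A: "\<rho> a = upclose 2 {[hcell 1, hemp]}" and B: "\<rho> b = upclose 2 {[hemp, hcell 1]}"
  have "[hcell 1, hcell 1] \<in> sem 2 \<eta> \<rho> one_pts_any"
    using hcell1_look hsub_refl by (auto simp: sem_one less_2_cases_iff)
  moreover have "[hcell 1, hemp] \<in> \<rho> a" "[hemp, hcell 1] \<in> \<rho> b"
    using A B hsub_refl by (auto simp: upclose_def)
  moreover have "[hcell 1, hcell 1] = map2 hunion [hcell 1, hemp] [hemp, hcell 1]"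
    using hun1 hun2 by (simp del: One_nat_def)
  ultimately show "[hcell 1, hcell 1] \<in> sem 2 \<eta> \<rho> (Conj one_pts_any (SStar (AVar a) (AVar b)))"
  proof -
    assume o: "[hcell 1, hcell 1] \<in> sem 2 \<eta> \<rho> one_pts_any"
      and ra: "[hcell 1, hemp] \<in> \<rho> a" and rb: "[hemp, hcell 1] \<in> \<rho> b"
      and e: "[hcell 1, hcell 1] = map2 hunion [hcell 1, hemp] [hemp, hcell 1]"
    have l: "list_all2 hdisj [hcell 1, hemp] [hemp, hcell 1]" using hdisj1 hdisj2 by simp
    have "[hcell 1, hcell 1] \<in> sstar (\<rho> a) (\<rho> b)" unfolding sstar_def
      apply (rule CollectI)
      apply (rule exI[where x="[hcell 1, hemp]"])
      apply (rule exI[where x="[hemp, hcell 1]"])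
      using ra rb e l by blast
    thus ?thesis using o by simp
  qed
next
  fix \<eta> and \<rho> :: "'av \<Rightarrow> heap list set"
  assume A: "\<rho> a = upclose 2 {[hcell 1, hemp]}"
  show "sem 2 \<eta> \<rho> (SStar one_pts_any (AVar a)) = {}"
  proof (rule ccontr)
    assume "sem 2 \<eta> \<rho> (SStar one_pts_any (AVar a)) \<noteq> {}"
    then obtain fs gs where fs: "fs \<in> sem 2 \<eta> \<rho> one_pts_any" "gs \<in> \<rho> a" "list_all2 hdisj fs gs"
      by (auto simp: sstar_def)
    from fs(1) obtain f v where "hlookup f 1 = Some v" "hsub f (fs ! 0)" by (auto simp: sem_one)
    hence l1: "hlookup (fs!0) 1 = Some v" using hsub_look by blast
    from fs(2) A have "hsub (hcell 1) (gs ! 0)" by (auto simp: upclose_def list_all2_Cons1)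
    hence l2: "hlookup (gs!0) 1 = Some 0" using hcell1_look hsub_look by blast
    have "hdisj (fs!0) (gs!0)" using fs(3) fs(1) by (auto simp: sem_one list_all2_conv_all_nth)
    thus False using l1 l2 hdisj_look by fastforce
  qed
next
  fix \<eta> and \<rho> :: "'av \<Rightarrow> heap list set"
  assume B: "\<rho> b = upclose 2 {[hemp, hcell 1]}"
  show "sem 2 \<eta> \<rho> (SStar one_pts_any (AVar b)) = {}"
  proof (rule ccontr)
    assume "sem 2 \<eta> \<rho> (SStar one_pts_any (AVar b)) \<noteq> {}"
    then obtain fs gs where fs: "fs \<in> sem 2 \<eta> \<rho> one_pts_any" "gs \<in> \<rho> b" "list_all2 hdisj fs gs"
      by (auto simp: sstar_def)
    from fs(1) obtain f v where "hlookup f 1 = Some v" "hsub f (fs ! 1)" by (auto simp: sem_one)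
    hence l1: "hlookup (fs!1) 1 = Some v" using hsub_look by blast
    from fs(2) B have "hsub (hcell 1) (gs ! 1)" by (auto simp: upclose_def list_all2_Cons1)
    hence l2: "hlookup (gs!1) 1 = Some 0" using hcell1_look hsub_look by blast
    have "hdisj (fs!1) (gs!1)" using fs(3) fs(1) by (auto simp: sem_one list_all2_conv_all_nth)
    thus False using l1 l2 hdisj_look by fastforce
  qed
qed

end
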